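(* Let $\mathcal S$ be an input-altering letter-to-letter transducer over $\Sigma$. Let $\alpha_0(\cdot)$ be the construction below, let $\mathcal T_1=\alpha_0(\mathcal S)$ and $\mathcal T_2=(\alpha_0(\mathcal S^{-1}))^{-1}$. Then (1) $|\alpha_0(\mathcal S)|=\Theta(|\mathcal S|)$, and (2) $\{R(\mathcal T_1),R(\mathcal T_2)\}$ is a rational asymmetric partition of $R(\mathcal S)$. Construction: for a letter-to-letter transducer $\mathcal S=(Q,\Sigma,T,I,F)$, $\alpha_0(\mathcal S)=(Q',\Sigma,T',I',F')$ where $Q'=Q^\lambda\cup Q^A\cup Q^R$ (three disjoint copies of $Q$), $I'=I^\lambda$, $F'=F^A$, and $T'$ consists of: $(p^c,\sigma/\tau,q^c)$ for every $(p,\sigma/\tau,q)\in T$ and $c\in\{A,R\}$; $(p^\lambda,\sigma/\sigma,q^\lambda)$ for every $(p,\sigma/\sigma,q)\in T$; $(p^\lambda,\sigma/\tau,q^A)$ for every $(p,\sigma/\tau,q)\in T$ with $\sigma>_r\tau$; $(p^\lambda,\sigma/\tau,q^R)$ for every $(p,\sigma/\tau,q)\in T$ with $\sigma<_r\tau$.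
   Context: A transducer is a quintuple $\mathcal T=(Q,\Sigma,E,I,F)$ where $Q$ is a finite set of states, $\Sigma$ is a finite alphabet, $E\subseteq Q\times\{x/y : x,y\in\Sigma\cup\{\lambda\}\}\times Q$ is a finite set of transitions ($\lambda$ the empty word), $I\subseteq Q$ nonempty initial states, $F\subseteq Q$ final states. Paths, labels (concatenation of input parts / output parts), computations (empty or starting at an initial state), accepting computations (empty with $I\cap F\ne\emptyset$, or nonempty ending in a final state) are as usual, and $R(\mathcal T)$ is the set of labels of accepting computations. The size $|\mathcal T|$ is the number of states plus the number of transitions. $\mathcal T^{-1}$ is the transducer obtained by swapping input and output in every label, so $R(\mathcal T^{-1})=R(\mathcal T)^{-1}=\{y/x : x/y\in R(\mathcal T)\}$. A transducer is letter-to-letter if all labels are $\sigma/\tau$ with $\sigma,\tau\in\Sigma$, and input-altering if $R(\mathcal T)$ is irreflexive (contains no pair $u/u$). A relation is rational if it is realized by some transducer. A relation $A$ is asymmetric if $x/y\in A$ implies $y/x\notin A$. An asymmetric partition of an irreflexive relation $I$ is a partition $\{A,B\}$ of $I$ with $A,B$ asymmetric; it is rational if $A,B$ are rational. The alphabet is $\Sigma=\{0,1,\dots,q-1\}$ with its natural order; the radix order: $u<_r v$ iff $|u|<|v|$, or $|u|=|v|$ and $u$ precedes $v$ lexicographically. *)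

theory Defs
  imports Complex_Main
begin

text \<open>Letters are natural numbers; the alphabet is {0..<q}. A word is a list of letters.
  A label x/y with x,y in Sigma or empty is a pair of words of length at most 1.\<close>

type_synonym word = "nat list"
type_synonym label = "word \<times> word"

record 'q transducer =
  states :: "'q set"
  alph   :: "nat set"
  trans  :: "('q \<times> label \<times> 'q) set"
  init   :: "'q set"
  fin    :: "'q set"

definition wf_transducer :: "('q, 'z) transducer_scheme \<Rightarrow> bool" where
  "wf_transducer T \<longleftrightarrow>
     finite (states T) \<and> (\<exists>q::nat. alph T = {0..<q}) \<and>
     trans T \<subseteq> states T \<times> {(x, y). length x \<le> 1 \<and> length y \<le> 1 \<and>
                                  set x \<subseteq> alph T \<and> set y \<subseteq> alph T} \<times> states T \<and>
     finite (trans T) \<and>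
     init T \<noteq> {} \<and> init T \<subseteq> states T \<and> fin T \<subseteq> states T"

inductive path :: "('q, 'z) transducer_scheme \<Rightarrow> 'q \<Rightarrow> word \<Rightarrow> word \<Rightarrow> 'q \<Rightarrow> bool"
  for T where
  path_empty: "path T p [] [] p"
| path_step: "(p, (x, y), r) \<in> trans T \<Longrightarrow> path T r u v q \<Longrightarrow> path T p (x @ u) (y @ v) q"

text \<open>Labels of accepting computations (the empty computation at a state in I \<inter> F gives (\<lambda>,\<lambda>)).\<close>
definition R :: "('q, 'z) transducer_scheme \<Rightarrow> (word \<times> word) set" where
  "R T = {(u, v). \<exists>i\<in>init T. \<exists>f\<in>fin T. path T i u v f}"

definition tsize :: "('q, 'z) transducer_scheme \<Rightarrow> nat" where
  "tsize T = card (states T) + card (trans T)"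

definition tinv :: "'q transducer \<Rightarrow> 'q transducer" where
  "tinv T = T\<lparr>trans := {(p, (y, x), q) | p x y q. (p, (x, y), q) \<in> trans T}\<rparr>"

definition letter_to_letter :: "('q, 'z) transducer_scheme \<Rightarrow> bool" where
  "letter_to_letter T \<longleftrightarrow> (\<forall>(p, (x, y), q) \<in> trans T. length x = 1 \<and> length y = 1)"

definition input_altering :: "('q, 'z) transducer_scheme \<Rightarrow> bool" where
  "input_altering T \<longleftrightarrow> (\<forall>u. (u, u) \<notin> R T)"

definition asymmetric :: "(word \<times> word) set \<Rightarrow> bool" where
  "asymmetric A \<longleftrightarrow> (\<forall>x y. (x, y) \<in> A \<longrightarrow> (y, x) \<notin> A)"

definition irreflexive_rel :: "(word \<times> word) set \<Rightarrow> bool" where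
  "irreflexive_rel A \<longleftrightarrow> (\<forall>x. (x, x) \<notin> A)"

text \<open>A rational relation over alphabet Sigma: realized by some transducer (states taken in nat,
  which loses no generality since state sets are finite).\<close>
definition rational :: "nat set \<Rightarrow> (word \<times> word) set \<Rightarrow> bool" where
  "rational \<Sigma> A \<longleftrightarrow> (\<exists>T :: nat transducer. wf_transducer T \<and> alph T = \<Sigma> \<and> R T = A)"

definition asym_partition :: "(word \<times> word) set \<Rightarrow> (word \<times> word) set \<Rightarrow> (word \<times> word) set \<Rightarrow> bool" where
  "asym_partition I A B \<longleftrightarrow> A \<union> B = I \<and> A \<inter> B = {} \<and> asymmetric A \<and> asymmetric B"

definition rational_asym_partition ::
  "nat set \<Rightarrow> (word \<times> word) set \<Rightarrow> (word \<times> word) set \<Rightarrow> (word \<times> word) set \<Rightarrow> bool" where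
  "rational_asym_partition \<Sigma> I A B \<longleftrightarrow> asym_partition I A B \<and> rational \<Sigma> A \<and> rational \<Sigma> B"

definition radix_less :: "word \<Rightarrow> word \<Rightarrow> bool" where
  "radix_less u v \<longleftrightarrow> length u < length v \<or>
     (length u = length v \<and> (u, v) \<in> lexord {(a, b). a < b})"

datatype tag = Lam | Acc | Rej

definition alpha0 :: "'q transducer \<Rightarrow> ('q \<times> tag) transducer" where
  "alpha0 S = \<lparr> states = states S \<times> {Lam, Acc, Rej},
     alph = alph S,
     trans = {((p, c), l, (q, c)) | p l q c. (p, l, q) \<in> trans S \<and> c \<in> {Acc, Rej}}
           \<union> {((p, Lam), (x, x), (q, Lam)) | p x q. (p, (x, x), q) \<in> trans S}
           \<union> {((p, Lam), (x, y), (q, Acc)) | p x y q. (p, (x, y), q) \<in> trans S \<and> radix_less y x}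
           \<union> {((p, Lam), (x, y), (q, Rej)) | p x y q. (p, (x, y), q) \<in> trans S \<and> radix_less x y},
     init = init S \<times> {Lam},
     fin = fin S \<times> {Acc} \<rparr>"

end

theory Submission
  imports Defs
begin

abbreviation LT :: "(nat \<times> nat) set" where "LT \<equiv> {(a, b). a < b}"

lemma trans_alpha0:
  "((p,c),l,(q,d)) \<in> trans (alpha0 S) \<longleftrightarrow> (p,l,q) \<in> trans S \<and>
     ((c = d \<and> c \<noteq> Lam) \<or> (c = Lam \<and> d = Lam \<and> fst l = snd l)
      \<or> (c = Lam \<and> d = Acc \<and> radix_less (snd l) (fst l))
      \<or> (c = Lam \<and> d = Rej \<and> radix_less (fst l) (snd l)))"
  unfolding alpha0_def by (cases l; cases c; cases d; auto)

lemma trans_tinv: "(p,l,q) \<in> trans (tinv X) \<longleftrightarrow> (p,(snd l, fst l),q) \<in> trans X"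
  unfolding tinv_def by (cases l) auto

lemma path_tinv1: "path (tinv X) p u v q \<Longrightarrow> path X p v u q"
  by (induction rule: path.induct) (auto intro: path.intros simp: trans_tinv)

lemma path_tinv2: "path X p u v q \<Longrightarrow> path (tinv X) p v u q"
  by (induction rule: path.induct) (auto intro: path.intros simp: trans_tinv)

lemma R_tinv: "R (tinv X) = {(u, v). (v, u) \<in> R X}"
proof -
  have it: "init (tinv X) = init X" "fin (tinv X) = fin X" by (simp_all add: tinv_def)
  then show ?thesis unfolding R_def
  proof (intro set_eqI iffI, goal_cases)
    case (1 z)
    then obtain u v i f where "z = (u,v)" "i \<in> init X" "f \<in> fin X" "path (tinv X) i u v f" by auto
    then show ?case using path_tinv1[of X i u v f] it by auto
  next
    case (2 z)
    then obtain u v i f where "z = (u,v)" "i \<in> init X" "f \<in> fin X" "path X i v u f" by auto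
    then show ?case using path_tinv2[of X i v u f] it by auto
  qed
qed

lemma ltl_tinv: "letter_to_letter S \<Longrightarrow> letter_to_letter (tinv S)"
  unfolding letter_to_letter_def tinv_def by auto

lemma path_len: "path S p u v q \<Longrightarrow> letter_to_letter S \<Longrightarrow> length u = length v"
  by (induction rule: path.induct) (auto simp: letter_to_letter_def)

lemma path_proj: "path (alpha0 S) s u v t \<Longrightarrow> path S (fst s) u v (fst t)"
proof (induction rule: path.induct)
  case (path_empty p) then show ?case by (rule path.path_empty)
next
  case (path_step p x y r u v q)
  then show ?case
    by (cases p; cases r) (auto simp: trans_alpha0 intro: path.path_step)
qed

lemma path_rej: "path (alpha0 S) s u v t \<Longrightarrow> snd s = Rej \<Longrightarrow> snd t = Rej"
proof (induction rule: path.induct)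
  case (path_empty p) then show ?case by simp
next
  case (path_step p x y r u v q)
  then show ?case
    by (cases p; cases r) (auto simp: trans_alpha0)
qed

lemma path_acc: "path S p u v q \<Longrightarrow> path (alpha0 S) (p,Acc) u v (q,Acc)"
proof (induction rule: path.induct)
  case (path_empty p) then show ?case by (rule path.path_empty)
next
  case (path_step p x y r u v q)
  have "((p,Acc),(x,y),(r,Acc)) \<in> trans (alpha0 S)" using path_step.hyps(1) by (simp add: trans_alpha0)
  from path.path_step[OF this path_step.IH] show ?case .
qed

lemma path_lam_acc: "path (alpha0 S) s u v t \<Longrightarrow> letter_to_letter S \<Longrightarrow> snd s = Lam \<Longrightarrow> snd t = Acc
   \<Longrightarrow> (v, u) \<in> lexord LT"
proof (induction rule: path.induct)
  case (path_empty p) then show ?case by simp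
next
  case (path_step p x y r u v q)
  obtain p0 c where pc: "p = (p0, c)" by (cases p)
  obtain r0 d where rd: "r = (r0, d)" by (cases r)
  from path_step.hyps(1) have tr: "((p0,c),(x,y),(r0,d)) \<in> trans (alpha0 S)" using pc rd by simp
  hence trS: "(p0,(x,y),r0) \<in> trans S" by (simp add: trans_alpha0)
  with path_step.prems(1) obtain a b where xy: "x = [a]" "y = [b]"
    unfolding letter_to_letter_def by (fastforce simp: length_Suc_conv)
  show ?case
  proof (cases d)
    case Lam
    with tr path_step pc rd have "x = y" "(v,u) \<in> lexord LT" by (auto simp: trans_alpha0)
    then show ?thesis by (simp add: lexord_same_pref_iff)
  next
    case Acc
    with tr path_step pc rd have "radix_less y x" by (auto simp: trans_alpha0)
    then have "b < a" using xy by (simp add: radix_less_def)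
    then show ?thesis using xy by simp
  next
    case Rej
    with path_rej[OF path_step.hyps(2)] path_step rd show ?thesis by simp
  qed
qed

lemma path_to_acc: "path S p u v q \<Longrightarrow> letter_to_letter S \<Longrightarrow> u = w @ a # u' \<Longrightarrow> v = w @ b # v'
   \<Longrightarrow> b < a \<Longrightarrow> path (alpha0 S) (p,Lam) u v (q,Acc)"
proof (induction arbitrary: w rule: path.induct)
  case (path_empty p) then show ?case by simp
next
  case (path_step p x y r u v q)
  with path_step.prems(1) obtain c d where xy: "x = [c]" "y = [d]"
    unfolding letter_to_letter_def by (fastforce simp: length_Suc_conv)
  show ?case
  proof (cases w)
    case Nil
    with path_step xy have e: "c = a" "d = b" "u = u'" "v = v'" by auto
    have "((p,Lam),(x,y),(r,Acc)) \<in> trans (alpha0 S)"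
      using path_step.hyps(1) path_step.prems(4) xy e by (simp add: trans_alpha0 radix_less_def)
    from path.path_step[OF this path_acc[OF path_step.hyps(2)]] show ?thesis .
  next
    case (Cons e w')
    with path_step xy have e: "c = e" "d = e" "u = w' @ a # u'" "v = w' @ b # v'" by auto
    have "((p,Lam),(x,y),(r,Lam)) \<in> trans (alpha0 S)"
      using path_step.hyps(1) xy e by (simp add: trans_alpha0)
    from path.path_step[OF this path_step.IH[OF path_step.prems(1) e(3,4) path_step.prems(4)]]
    show ?thesis .
  qed
qed


lemma R_alpha0: assumes "letter_to_letter S"
  shows "R (alpha0 S) = {(u,v). (u,v) \<in> R S \<and> (v,u) \<in> lexord LT}"
proof (intro set_eqI iffI)
  fix z assume "z \<in> R (alpha0 S)"
  then obtain u v i f where z: "z = (u,v)" and i: "i \<in> init (alpha0 S)" and f: "f \<in> fin (alpha0 S)"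
    and p: "path (alpha0 S) i u v f" unfolding R_def by auto
  from i f have "fst i \<in> init S" "snd i = Lam" "fst f \<in> fin S" "snd f = Acc"
    by (auto simp: alpha0_def)
  with path_proj[OF p] path_lam_acc[OF p assms] show "z \<in> {(u,v). (u,v) \<in> R S \<and> (v,u) \<in> lexord LT}"
    unfolding R_def z by auto
next
  fix z assume "z \<in> {(u,v). (u,v) \<in> R S \<and> (v,u) \<in> lexord LT}"
  then obtain u v i f where z: "z = (u,v)" and i: "i \<in> init S" and f: "f \<in> fin S"
    and p: "path S i u v f" and lx: "(v,u) \<in> lexord LT" unfolding R_def by auto
  have len: "length u = length v" using path_len[OF p assms] .
  from lx obtain w a b v' u' where "a < b" "v = w @ a # v'" "u = w @ b # u'"
    unfolding lexord_def using len by auto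
  from path_to_acc[OF p assms this(3,2,1)] i f show "z \<in> R (alpha0 S)"
    unfolding R_def z by (auto simp: alpha0_def)
qed

definition TG :: "tag set" where "TG = {Lam, Acc, Rej}"

lemma trans_alpha0_sub:
  "trans (alpha0 S) \<subseteq> (\<lambda>((p,l,q),(c,d)). ((p,c),l,(q,d))) ` (trans S \<times> (TG \<times> TG))"
proof
  fix z assume z: "z \<in> trans (alpha0 S)"
  obtain p c l q d where zz: "z = ((p,c),l,(q,d))" by (metis prod.collapse)
  with z have "(p,l,q) \<in> trans S" by (simp add: trans_alpha0)
  moreover have "c \<in> TG" "d \<in> TG" unfolding TG_def by (cases c; simp) (cases d; simp)
  ultimately show "z \<in> (\<lambda>((p,l,q),(c,d)). ((p,c),l,(q,d))) ` (trans S \<times> (TG \<times> TG))"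
    unfolding zz by (intro image_eqI[where x="((p,l,q),(c,d))"]) auto
qed

lemma card_TG: "card TG = 3" unfolding TG_def by simp

lemma size_bounds: assumes "wf_transducer S"
  shows "tsize S \<le> tsize (alpha0 S) \<and> tsize (alpha0 S) \<le> 9 * tsize S"
proof -
  have fT: "finite (trans S)" and fQ: "finite (states S)" using assms by (auto simp: wf_transducer_def)
  have st: "states (alpha0 S) = states S \<times> TG" by (simp add: alpha0_def TG_def)
  have cs: "card (states (alpha0 S)) = 3 * card (states S)"
    unfolding st card_cartesian_product card_TG by simp
  have fin9: "finite (trans S \<times> (TG \<times> TG))" using fT by (simp add: TG_def)
  have up: "card (trans (alpha0 S)) \<le> 9 * card (trans S)"
  proof -
    have "card (trans (alpha0 S)) \<le> card ((\<lambda>((p,l,q),(c,d)). ((p,c),l,(q,d))) ` (trans S \<times> (TG \<times> TG)))"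
      by (rule card_mono[OF _ trans_alpha0_sub]) (use fin9 in simp)
    also have "\<dots> \<le> card (trans S \<times> (TG \<times> TG))" by (rule card_image_le[OF fin9])
    also have "\<dots> = 9 * card (trans S)" by (simp add: card_cartesian_product card_TG)
    finally show ?thesis .
  qed
  have ft': "finite (trans (alpha0 S))"
    by (rule finite_subset[OF trans_alpha0_sub]) (use fin9 in simp)
  have lo: "card (trans S) \<le> card (trans (alpha0 S))"
  proof -
    have sub: "(\<lambda>(p,l,q). ((p,Acc),l,(q,Acc))) ` trans S \<subseteq> trans (alpha0 S)"
      by (auto simp: trans_alpha0)
    have "inj_on (\<lambda>(p,l,q). ((p,Acc),l,(q,Acc))) (trans S)" by (auto simp: inj_on_def)
    then have "card (trans S) = card ((\<lambda>(p,l,q). ((p,Acc),l,(q,Acc))) ` trans S)"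
      by (simp add: card_image)
    also have "\<dots> \<le> card (trans (alpha0 S))" by (rule card_mono[OF ft' sub])
    finally show ?thesis .
  qed
  show ?thesis using cs up lo unfolding tsize_def by simp
qed

lemma alpha0_simps: "states (alpha0 S) = states S \<times> TG" "alph (alpha0 S) = alph S"
  "init (alpha0 S) = init S \<times> {Lam}" "fin (alpha0 S) = fin S \<times> {Acc}"
  by (simp_all add: alpha0_def TG_def)

lemma TG_all: "c \<in> TG" unfolding TG_def by (cases c) auto

lemma wf_alpha0: assumes "wf_transducer S" shows "wf_transducer (alpha0 S)"
proof -
  have fT: "finite (trans S)" using assms by (auto simp: wf_transducer_def)
  have fin9: "finite (trans S \<times> (TG \<times> TG))" using fT by (simp add: TG_def)
  have ft': "finite (trans (alpha0 S))"
    by (rule finite_subset[OF trans_alpha0_sub]) (use fin9 in simp)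
  have sub: "trans (alpha0 S) \<subseteq> states (alpha0 S) \<times> {(x, y). length x \<le> 1 \<and> length y \<le> 1 \<and>
                                  set x \<subseteq> alph (alpha0 S) \<and> set y \<subseteq> alph (alpha0 S)} \<times> states (alpha0 S)"
  proof
    fix z assume z: "z \<in> trans (alpha0 S)"
    obtain p c l q d where zz: "z = ((p,c),l,(q,d))" by (metis prod.collapse)
    with z have "(p,l,q) \<in> trans S" by (simp add: trans_alpha0)
    with assms have "(p,l,q) \<in> states S \<times> {(x, y). length x \<le> 1 \<and> length y \<le> 1 \<and>
                                  set x \<subseteq> alph S \<and> set y \<subseteq> alph S} \<times> states S"
      unfolding wf_transducer_def by blast
    then show "z \<in> states (alpha0 S) \<times> {(x, y). length x \<le> 1 \<and> length y \<le> 1 \<and>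
                                  set x \<subseteq> alph (alpha0 S) \<and> set y \<subseteq> alph (alpha0 S)} \<times> states (alpha0 S)"
      unfolding zz alpha0_simps by (simp add: TG_all)
  qed
  have "finite (states (alpha0 S))" using assms by (simp add: alpha0_simps wf_transducer_def TG_def)
  moreover have "\<exists>q::nat. alph (alpha0 S) = {0..<q}" using assms by (simp add: alpha0_simps wf_transducer_def)
  moreover have "init (alpha0 S) \<noteq> {}" "init (alpha0 S) \<subseteq> states (alpha0 S)" "fin (alpha0 S) \<subseteq> states (alpha0 S)"
    using assms by (auto simp: alpha0_simps wf_transducer_def TG_all)
  ultimately show ?thesis using ft' sub unfolding wf_transducer_def by blast
qed

lemma wf_tinv: assumes "wf_transducer S" shows "wf_transducer (tinv S)"
proof -
  have eq: "trans (tinv S) = (\<lambda>(p,(x,y),q). (p,(y,x),q)) ` trans S"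
    unfolding tinv_def by (force simp: image_iff)
  have "finite (trans (tinv S))" unfolding eq using assms by (simp add: wf_transducer_def)
  moreover have "trans (tinv S) \<subseteq> states (tinv S) \<times> {(x, y). length x \<le> 1 \<and> length y \<le> 1 \<and>
                                  set x \<subseteq> alph (tinv S) \<and> set y \<subseteq> alph (tinv S)} \<times> states (tinv S)"
    using assms unfolding eq wf_transducer_def by (auto simp: tinv_def)
  ultimately show ?thesis using assms unfolding wf_transducer_def by (auto simp: tinv_def)
qed


definition mapT :: "('a \<Rightarrow> 'b) \<Rightarrow> 'a transducer \<Rightarrow> 'b transducer" where
  "mapT f T = \<lparr> states = f ` states T, alph = alph T,
     trans = (\<lambda>(p,l,q). (f p, l, f q)) ` trans T, init = f ` init T, fin = f ` fin T \<rparr>"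

lemma path_map_fwd: "path T p u v q \<Longrightarrow> path (mapT f T) (f p) u v (f q)"
proof (induction rule: path.induct)
  case (path_empty p) then show ?case by (rule path.path_empty)
next
  case (path_step p x y r u v q)
  have "(f p, (x,y), f r) \<in> trans (mapT f T)" using path_step.hyps(1)
    unfolding mapT_def by (force simp: image_iff)
  from path.path_step[OF this path_step.IH] show ?case .
qed

lemma path_map_bwd: "path (mapT f T) p' u v q' \<Longrightarrow> wf_transducer T \<Longrightarrow> inj_on f (states T)
  \<Longrightarrow> p \<in> states T \<Longrightarrow> f p = p' \<Longrightarrow> \<exists>q\<in>states T. f q = q' \<and> path T p u v q"
proof (induction arbitrary: p rule: path.induct)
  case (path_empty p') then show ?case by (auto intro: path.path_empty)
next
  case (path_step p' x y r' u v q' p)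
  from path_step.hyps(1) obtain p0 r0 where t: "(p0,(x,y),r0) \<in> trans T" "f p0 = p'" "f r0 = r'"
    unfolding mapT_def by auto
  have "p0 \<in> states T" "r0 \<in> states T" using t(1) path_step.prems(1)
    unfolding wf_transducer_def by blast+
  with path_step.prems t have "p0 = p" by (metis inj_on_def)
  from path_step.IH[OF path_step.prems(1,2) \<open>r0 \<in> states T\<close> t(3)] obtain q where
    "q \<in> states T" "f q = q'" "path T r0 u v q" by blast
  with t \<open>p0 = p\<close> show ?case by (blast intro: path.path_step)
qed

lemma rational_wf: assumes "wf_transducer (T :: 'a transducer)" shows "rational (alph T) (R T)"
proof -
  have fQ: "finite (states T)" using assms by (simp add: wf_transducer_def)
  from finite_imp_inj_to_nat_seg[OF fQ] obtain f :: "'a \<Rightarrow> nat" and n where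
    inj: "inj_on f (states T)" by blast
  let ?T = "mapT f T"
  have wf': "wf_transducer ?T"
    using assms unfolding wf_transducer_def mapT_def by (auto 4 4 simp: image_iff)
  have "R ?T = R T"
  proof (intro set_eqI iffI)
    fix z assume "z \<in> R ?T"
    then obtain u v i f' where z: "z = (u,v)" "i \<in> init T" "f' \<in> fin T" "path ?T (f i) u v (f f')"
      unfolding R_def mapT_def by auto
    have "i \<in> states T" "f' \<in> states T" using z assms unfolding wf_transducer_def by auto
    from path_map_bwd[OF z(4) assms inj this(1) refl] obtain q where
      "q \<in> states T" "f q = f f'" "path T i u v q" by blast
    with inj \<open>f' \<in> states T\<close> have "q = f'" by (metis inj_on_def)
    with z \<open>path T i u v q\<close> show "z \<in> R T" unfolding R_def by auto
  next
    fix z assume "z \<in> R T"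
    then obtain u v i f' where z: "z = (u,v)" "i \<in> init T" "f' \<in> fin T" "path T i u v f'"
      unfolding R_def by auto
    from path_map_fwd[OF z(4), of f] z show "z \<in> R ?T" unfolding R_def mapT_def by auto
  qed
  moreover have "alph ?T = alph T" by (simp add: mapT_def)
  ultimately show ?thesis unfolding rational_def using wf' by blast
qed

theorem proposition1:
  fixes S :: "'q transducer"
  assumes "wf_transducer S" and "letter_to_letter S" and "input_altering S"
  shows "(\<exists>c1 c2 :: real. c1 > 0 \<and> c2 > 0 \<and>
            (\<forall>S' :: 'q transducer. wf_transducer S' \<and> letter_to_letter S' \<and> input_altering S' \<longrightarrow>
               c1 * real (tsize S') \<le> real (tsize (alpha0 S')) \<and>
               real (tsize (alpha0 S')) \<le> c2 * real (tsize S')))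
       \<and> rational_asym_partition (alph S) (R S) (R (alpha0 S)) (R (tinv (alpha0 (tinv S))))"
proof
  show "\<exists>c1 c2 :: real. c1 > 0 \<and> c2 > 0 \<and>
            (\<forall>S' :: 'q transducer. wf_transducer S' \<and> letter_to_letter S' \<and> input_altering S' \<longrightarrow>
               c1 * real (tsize S') \<le> real (tsize (alpha0 S')) \<and>
               real (tsize (alpha0 S')) \<le> c2 * real (tsize S'))"
  proof -
    have "\<forall>S' :: 'q transducer. wf_transducer S' \<and> letter_to_letter S' \<and> input_altering S' \<longrightarrow>
               (1::real) * real (tsize S') \<le> real (tsize (alpha0 S')) \<and>
               real (tsize (alpha0 S')) \<le> (9::real) * real (tsize S')"
    proof (intro allI impI)
      fix S' :: "'q transducer"
      assume "wf_transducer S' \<and> letter_to_letter S' \<and> input_altering S'"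
      then have "tsize S' \<le> tsize (alpha0 S') \<and> tsize (alpha0 S') \<le> 9 * tsize S'"
        using size_bounds by blast
      then show "(1::real) * real (tsize S') \<le> real (tsize (alpha0 S')) \<and>
               real (tsize (alpha0 S')) \<le> (9::real) * real (tsize S')" by simp
    qed
    then show ?thesis by (intro exI[of _ "1::real"] exI[of _ "9::real"]) simp
  qed
next
  have A: "R (alpha0 S) = {(u,v). (u,v) \<in> R S \<and> (v,u) \<in> lexord LT}"
    by (rule R_alpha0[OF assms(2)])
  have B: "R (tinv (alpha0 (tinv S))) = {(u,v). (u,v) \<in> R S \<and> (u,v) \<in> lexord LT}"
    unfolding R_tinv R_alpha0[OF ltl_tinv[OF assms(2)]] by auto
  have trLT: "Relation.trans LT" by (auto simp: Relation.trans_def)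
  have irr: "\<And>x. (x, x) \<notin> lexord LT" by (rule lexord_irreflexive) simp
  have asy: "\<And>x y. (x,y) \<in> lexord LT \<Longrightarrow> (y,x) \<in> lexord LT \<Longrightarrow> False"
    using lexord_trans[OF _ _ trLT] irr by blast
  have lin: "\<And>x y. (x,y) \<in> lexord LT \<or> x = y \<or> (y,x) \<in> lexord LT"
    by (rule lexord_linear) auto
  have neq: "\<And>u v. (u,v) \<in> R S \<Longrightarrow> u \<noteq> v" using assms(3) unfolding input_altering_def by blast
  have part: "asym_partition (R S) (R (alpha0 S)) (R (tinv (alpha0 (tinv S))))"
    unfolding asym_partition_def asymmetric_def A B
    using asy lin neq by blast
  have r1: "rational (alph S) (R (alpha0 S))"
    using rational_wf[OF wf_alpha0[OF assms(1)]] by (simp add: alpha0_simps)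
  have r2: "rational (alph S) (R (tinv (alpha0 (tinv S))))"
    using rational_wf[OF wf_tinv[OF wf_alpha0[OF wf_tinv[OF assms(1)]]]]
    by (simp add: alpha0_simps tinv_def)
  show "rational_asym_partition (alph S) (R S) (R (alpha0 S)) (R (tinv (alpha0 (tinv S))))"
    unfolding rational_asym_partition_def using part r1 r2 by blast
qed

end
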